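(* Let $T$ be a tournament with an even number of arcs. Then $T$ has a $\overrightarrow{P_3}$-decomposition if and only if $$a(X,Y)\le a(Y,X)+a(X)+a(Y)+a(Z,X)+a(Y,Z)$$ for every partition $V(T)=X\cup Y\cup Z$ into three pairwise disjoint (possibly empty) sets.
   Context: A tournament is an orientation of a complete graph. A $\overrightarrow{P_3}$-decomposition of a digraph $D$ is a partition of $A(D)$ into directed paths of length $2$ (pairs of arcs $(u,v),(v,w)$). For $X,Y\subseteq V(T)$, $a(X,Y)$ is the number of arcs with tail in $X$ and head in $Y$, and $a(X)=a(X,X)$. *)

theory Defs
  imports Main
begin

text \<open>A digraph is given by a vertex set V and an arc set A (pairs (tail, head)).\<close>

definition tournament :: "'a set \<Rightarrow> ('a \<times> 'a) set \<Rightarrow> bool" where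
  "tournament V A \<longleftrightarrow> finite V \<and> A \<subseteq> V \<times> V \<and> (\<forall>v. (v, v) \<notin> A) \<and>
     (\<forall>u\<in>V. \<forall>v\<in>V. u \<noteq> v \<longrightarrow> ((u, v) \<in> A \<longleftrightarrow> (v, u) \<notin> A))"

definition path_arcs :: "'a \<times> 'a \<times> 'a \<Rightarrow> ('a \<times> 'a) set" where
  "path_arcs p = (case p of (u, v, w) \<Rightarrow> {(u, v), (v, w)})"

definition P3_decomposition :: "('a \<times> 'a) set \<Rightarrow> ('a \<times> 'a \<times> 'a) set \<Rightarrow> bool" where
  "P3_decomposition A P \<longleftrightarrow>
     (\<forall>(u, v, w)\<in>P. (u, v) \<in> A \<and> (v, w) \<in> A \<and> (u, v) \<noteq> (v, w)) \<and>
     (\<forall>e\<in>A. \<exists>!p. p \<in> P \<and> e \<in> path_arcs p)"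

definition has_P3_decomposition :: "('a \<times> 'a) set \<Rightarrow> bool" where
  "has_P3_decomposition A \<longleftrightarrow> (\<exists>P. P3_decomposition A P)"

definition arcs_between :: "('a \<times> 'a) set \<Rightarrow> 'a set \<Rightarrow> 'a set \<Rightarrow> nat" where
  "arcs_between A X Y = card {(x, y) \<in> A. x \<in> X \<and> y \<in> Y}"

end

theory Submission
  imports Defs
begin


definition nb :: "('a\<times>'a) set \<Rightarrow> 'a \<Rightarrow> 'a set" where "nb H v = {w. (v,w)\<in>H}"
definition dg :: "('a\<times>'a) set \<Rightarrow> 'a \<Rightarrow> nat" where "dg H v = card (nb H v)"
definition gr :: "'a set \<Rightarrow> ('a\<times>'a) set \<Rightarrow> bool" where
  "gr V H \<longleftrightarrow> H \<subseteq> V\<times>V \<and> (\<forall>a b. (a,b)\<in>H \<longrightarrow> (b,a)\<in>H) \<and> (\<forall>a. (a,a)\<notin>H)"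
definition addE :: "('a\<times>'a) set \<Rightarrow> 'a \<Rightarrow> 'a \<Rightarrow> ('a\<times>'a) set" where
  "addE H a b = H \<union> {(a,b),(b,a)}"
definition delE :: "('a\<times>'a) set \<Rightarrow> 'a \<Rightarrow> 'a \<Rightarrow> ('a\<times>'a) set" where
  "delE H a b = H - {(a,b),(b,a)}"

lemma mem_addE[simp]: "(x,y) \<in> addE H a b \<longleftrightarrow> (x,y)\<in>H \<or> (x=a \<and> y=b) \<or> (x=b \<and> y=a)"
  by (auto simp: addE_def)
lemma mem_delE[simp]: "(x,y) \<in> delE H a b \<longleftrightarrow> (x,y)\<in>H \<and> \<not>(x=a \<and> y=b) \<and> \<not>(x=b \<and> y=a)"
  by (auto simp: delE_def)

lemma gr_add: "gr V H \<Longrightarrow> a\<in>V \<Longrightarrow> b\<in>V \<Longrightarrow> a\<noteq>b \<Longrightarrow> gr V (addE H a b)"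
  unfolding gr_def addE_def by auto
lemma gr_del: "gr V H \<Longrightarrow> gr V (delE H a b)"
  unfolding gr_def delE_def by auto

lemma nb_sub: "gr V H \<Longrightarrow> nb H v \<subseteq> V"
  unfolding gr_def nb_def by auto
lemma nb_fin: "finite V \<Longrightarrow> gr V H \<Longrightarrow> finite (nb H v)"
  using nb_sub finite_subset by metis
lemma gr_sym: "gr V H \<Longrightarrow> (a,b)\<in>H \<Longrightarrow> (b,a)\<in>H"
  unfolding gr_def by auto
lemma gr_irr: "gr V H \<Longrightarrow> (a,b)\<in>H \<Longrightarrow> a\<noteq>b"
  unfolding gr_def by auto
lemma gr_in: "gr V H \<Longrightarrow> (a,b)\<in>H \<Longrightarrow> a\<in>V \<and> b\<in>V"
  unfolding gr_def by auto

lemma dg_add: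
  assumes "finite V" "gr V H" "a\<in>V" "b\<in>V" "a\<noteq>b" "(a,b)\<notin>H"
  shows "dg (addE H a b) v = dg H v + (if v=a \<or> v=b then 1 else 0)"
proof -
  have f: "finite (nb H v)" using nb_fin assms by metis
  have ba: "(b,a)\<notin>H" using assms gr_sym by metis
  show ?thesis
  proof (cases "v=a")
    case True
    then have e: "nb (addE H a b) v = insert b (nb H v)" unfolding nb_def using assms by auto
    have "b \<notin> nb H v" using True assms(6) unfolding nb_def by simp
    then show ?thesis using f True e unfolding dg_def by simp
  next
    case F1: False
    show ?thesis
    proof (cases "v=b")
      case True
      then have e: "nb (addE H a b) v = insert a (nb H v)" unfolding nb_def using assms by auto
      have "a \<notin> nb H v" using True ba unfolding nb_def by simp
      then show ?thesis using f True e F1 unfolding dg_def by simp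
    next
      case False
      then have "nb (addE H a b) v = nb H v" unfolding nb_def using F1 by auto
      then show ?thesis using False F1 unfolding dg_def by simp
    qed
  qed
qed


lemma dg_del:
  assumes "finite V" "gr V H" "(a,b)\<in>H"
  shows "dg (delE H a b) v = dg H v - (if v=a \<or> v=b then 1 else 0)"
proof -
  have f: "finite (nb H v)" using nb_fin assms(1,2) by metis
  have ba: "(b,a)\<in>H" using gr_sym[OF assms(2,3)] .
  have ab: "a\<noteq>b" using gr_irr[OF assms(2,3)] .
  show ?thesis
  proof (cases "v=a")
    case True
    then have e: "nb (delE H a b) v = nb H v - {b}" unfolding nb_def using ba by auto
    have "b \<in> nb H v" using True assms(3) unfolding nb_def by simp
    then show ?thesis using f True e unfolding dg_def by simp
  next
    case F1: False
    show ?thesis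
    proof (cases "v=b")
      case True
      then have e: "nb (delE H a b) v = nb H v - {a}" unfolding nb_def using ba by auto
      have "a \<in> nb H v" using True ba unfolding nb_def by simp
      then show ?thesis using f True e F1 unfolding dg_def by simp
    next
      case False
      then have "nb (delE H a b) v = nb H v" unfolding nb_def using F1 by auto
      then show ?thesis using False F1 unfolding dg_def by simp
    qed
  qed
qed


lemma nb_irr: "gr V H \<Longrightarrow> i \<notin> nb H i"
  unfolding nb_def gr_def by simp

lemma dg_compare:
  assumes "finite V" "gr V H" "\<forall>u\<in>nb H i. u\<noteq>r \<longrightarrow> u \<in> nb H r"
  shows "dg H i \<le> dg H r"
proof -
  have fi: "finite (nb H i)" "finite (nb H r)" using nb_fin assms(1,2) by metis+
  have ii: "i \<notin> nb H i" using nb_irr[OF assms(2)] .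
  have s: "nb H i - {r} \<subseteq> nb H r - {i}" using assms(3) ii by blast
  have c: "card (nb H i - {r}) \<le> card (nb H r - {i})" using s fi(2) card_mono by blast
  have e: "r \<in> nb H i \<longleftrightarrow> i \<in> nb H r" using gr_sym[OF assms(2)] unfolding nb_def by blast
  show ?thesis
  proof (cases "r \<in> nb H i")
    case True
    then have "card (nb H i - {r}) = card (nb H i) - 1" "card (nb H r - {i}) = card (nb H r) - 1"
      "card (nb H i) \<ge> 1" "card (nb H r) \<ge> 1" using e fi by (auto simp: card_gt_0_iff Suc_le_eq)
    then show ?thesis using c unfolding dg_def by linarith
  next
    case False
    then have "nb H i \<subseteq> nb H r" using assms(3) by (metis subsetI)
    then show ?thesis using fi card_mono unfolding dg_def by blast
  qed
qed



definition EG :: "'a set \<Rightarrow> ('a \<Rightarrow> nat) \<Rightarrow> bool" where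
 "EG V f \<longleftrightarrow> (\<forall>X Y Z. X \<union> Y \<union> Z = V \<and> X\<inter>Y={} \<and> X\<inter>Z={} \<and> Y\<inter>Z={} \<longrightarrow>
    sum f X \<le> card X * (card X - 1) + card X * card Z + sum f Y)"

lemma sum_dg:
  assumes "finite X" "\<forall>x\<in>X. finite (nb H x)"
  shows "sum (dg H) X = card (Sigma X (nb H))"
  using assms by (simp add: card_SigmaI dg_def)

lemma offdiag_card:
  assumes "finite X"
  shows "card {(x,y). x\<in>X \<and> y\<in>X \<and> x\<noteq>y} = card X * (card X - 1)"
proof -
  let ?D = "{(x,y). x\<in>X \<and> y\<in>X \<and> x\<noteq>y}"
  have u: "?D \<union> (\<lambda>x. (x,x)) ` X = X \<times> X" by auto
  have d: "?D \<inter> (\<lambda>x. (x,x)) ` X = {}" by auto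
  have fD: "finite ?D" by (rule finite_subset[of _ "X\<times>X"]) (use assms in auto)
  have ci: "card ((\<lambda>x. (x,x)) ` X) = card X" by (rule card_image) (auto simp: inj_on_def)
  have "card ?D + card X = card X * card X"
    using card_Un_disjoint[OF fD _ d] assms u ci by (simp add: card_cartesian_product)
  then show ?thesis by (simp add: algebra_simps)
qed

lemma stuck:
  assumes fin: "finite V" and g: "gr V H" and PV: "P \<subseteq> V" "r\<in>V" "r\<notin>P"
  and sat: "\<forall>v\<in>P. dg H v = f v" and defi: "dg H r < f r"
  and rP: "\<forall>i\<in>P. (r,i)\<in>H" and cl: "\<forall>a\<in>P. \<forall>b\<in>P. a\<noteq>b \<longrightarrow> (a,b)\<in>H"
  and Qc: "\<forall>k\<in>V-P-{r}. (\<forall>x\<in>insert r P. (k,x)\<in>H) \<or> (dg H k = f k \<and> (\<forall>w\<in>V-P-{r}. (k,w)\<notin>H))"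
  shows "\<not> EG V f"
proof
  assume eg: "EG V f"
  define X where "X = insert r P"
  define Q where "Q = V - X"
  define Z where "Z = {k\<in>Q. \<forall>x\<in>X. (k,x)\<in>H}"
  define Y where "Y = Q - Z"
  have fP: "finite P" using fin PV finite_subset by blast
  have fX: "finite X" using fP X_def by simp
  have fY: "finite Y" "finite Z" "finite Q" using fin unfolding Y_def Z_def Q_def by auto
  have part: "X \<union> Y \<union> Z = V" "X\<inter>Y={}" "X\<inter>Z={}" "Y\<inter>Z={}"
    using PV unfolding X_def Y_def Z_def Q_def by auto
  have le: "sum f X \<le> card X * (card X - 1) + card X * card Z + sum f Y"
    using eg part unfolding EG_def by blast
  have fnb: "\<forall>x. finite (nb H x)" using nb_fin[OF fin g] by blast
  have sX: "sum f X = f r + sum (dg H) P" using fP PV sat unfolding X_def by simp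
  have sX2: "sum (dg H) X = dg H r + sum (dg H) P" using fP PV unfolding X_def by simp
  have Ysat: "\<forall>y\<in>Y. dg H y = f y \<and> (\<forall>w. (y,w)\<in>H \<longrightarrow> w \<in> X)"
  proof
    fix y assume y: "y\<in>Y"
    then have yQ: "y \<in> V-P-{r}" and nz: "\<not>(\<forall>x\<in>X. (y,x)\<in>H)"
      unfolding Y_def Z_def Q_def X_def by auto
    then have c: "dg H y = f y \<and> (\<forall>w\<in>V-P-{r}. (y,w)\<notin>H)" using Qc unfolding X_def by blast
    have "\<forall>w. (y,w)\<in>H \<longrightarrow> w \<in> X"
    proof (intro allI impI)
      fix w assume "(y,w)\<in>H"
      then have "w\<in>V" "w \<notin> V-P-{r}" using c gr_in[OF g] by blast+
      then show "w\<in>X" unfolding X_def by blast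
    qed
    then show "dg H y = f y \<and> (\<forall>w. (y,w)\<in>H \<longrightarrow> w \<in> X)" using c by blast
  qed
  have sY: "sum f Y = sum (dg H) Y" using Ysat by simp
  define D where "D = {(x,y). x\<in>X \<and> y\<in>X \<and> x\<noteq>y}"
  define S where "S = (\<lambda>(a,b). (b,a)) ` Sigma Y (nb H)"
  have SY: "Sigma Y (nb H) \<subseteq> Y \<times> X" using Ysat unfolding nb_def by auto
  have cS: "card S = sum (dg H) Y"
  proof -
    have "card S = card (Sigma Y (nb H))" unfolding S_def
      by (rule card_image) (auto simp: inj_on_def)
    also have "\<dots> = sum (dg H) Y" using sum_dg fY fnb by metis
    finally show ?thesis .
  qed
  have cD: "card D = card X * (card X - 1)" unfolding D_def using offdiag_card fX by blast
  have cXZ: "card (X \<times> Z) = card X * card Z" by (simp add: card_cartesian_product)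
  have fD: "finite D" unfolding D_def by (rule finite_subset[of _ "X\<times>X"]) (use fX in auto)
  have fS: "finite S" unfolding S_def using fY fnb by auto
  have sub: "D \<union> (X\<times>Z) \<union> S \<subseteq> Sigma X (nb H)"
  proof
    fix p assume p: "p \<in> D \<union> (X\<times>Z) \<union> S"
    obtain a b where ab: "p = (a,b)" by fastforce
    have "a \<in> X \<and> (a,b)\<in>H"
    proof -
      { assume "p\<in>D"
        then have "a\<in>X" "b\<in>X" "a\<noteq>b" using ab unfolding D_def by auto
        then have "(a,b)\<in>H" using rP cl gr_sym[OF g] unfolding X_def by auto
        then have ?thesis using \<open>a\<in>X\<close> by blast }
      moreover
      { assume "p\<in>X\<times>Z"
        then have "a\<in>X" "b\<in>Z" using ab by auto
        then have "(b,a)\<in>H" unfolding Z_def by auto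
        then have ?thesis using \<open>a\<in>X\<close> gr_sym[OF g] by blast }
      moreover
      { assume "p\<in>S"
        then have "(b,a) \<in> Sigma Y (nb H)" using ab unfolding S_def by auto
        then have "(b,a)\<in>H" "a\<in>X" using SY unfolding nb_def by auto
        then have ?thesis using gr_sym[OF g] by blast }
      ultimately show ?thesis using p by blast
    qed
    then show "p \<in> Sigma X (nb H)" using ab unfolding nb_def by auto
  qed
  have d1: "D \<inter> (X\<times>Z) = {}" using part unfolding D_def by auto
  have d2: "(D \<union> (X\<times>Z)) \<inter> S = {}" using part SY unfolding D_def S_def by auto
  have "card (D \<union> (X\<times>Z) \<union> S) = card D + card (X\<times>Z) + card S"
    using card_Un_disjoint[OF fD _ d1] card_Un_disjoint[OF _ fS d2] fD fS fX fY by simp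
  moreover have "card (D \<union> (X\<times>Z) \<union> S) \<le> card (Sigma X (nb H))"
    using sub fX fnb by (intro card_mono) auto
  moreover have "card (Sigma X (nb H)) = sum (dg H) X" using sum_dg fX fnb by metis
  ultimately have "card X * (card X - 1) + card X * card Z + sum f Y \<le> sum (dg H) X"
    using cD cXZ cS sY by simp
  then show False using le sX sX2 defi by linarith
qed



lemma even_sym:
  "finite H \<Longrightarrow> (\<forall>a b. (a,b)\<in>H \<longrightarrow> (b,a)\<in>H) \<Longrightarrow> (\<forall>a. (a,a)\<notin>H) \<Longrightarrow> even (card H)"
proof (induction "card H" arbitrary: H rule: less_induct)
  case less
  show ?case
  proof (cases "H = {}")
    case True then show ?thesis by simp
  next
    case False
    then obtain a b where ab: "(a,b)\<in>H" by auto
    have ba: "(b,a)\<in>H" "a\<noteq>b" using ab less.prems by auto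
    define H' where "H' = H - {(a,b),(b,a)}"
    have c: "card H' = card H - 2" unfolding H'_def using ab ba less.prems(1)
      by (subst card_Diff_subset) auto
    have c2: "card H \<ge> 2"
    proof -
      have "{(a,b),(b,a)} \<subseteq> H" using ab ba by auto
      then have "card {(a,b),(b,a)} \<le> card H" using less.prems(1) card_mono by blast
      then show ?thesis using ba by simp
    qed
    have "even (card H')"
      by (rule less.hyps) (use c c2 less.prems in \<open>auto simp: H'_def\<close>)
    then show ?thesis using c c2
      by (metis add_diff_inverse_nat even_add even_numeral not_le)
  qed
qed

lemma sum_dg_V: "finite V \<Longrightarrow> gr V H \<Longrightarrow> sum (dg H) V = card H"
proof -
  assume a: "finite V" "gr V H"
  have "sum (dg H) V = card (Sigma V (nb H))" using sum_dg a nb_fin by metis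
  moreover have "Sigma V (nb H) = H" using a(2) unfolding gr_def nb_def by auto
  ultimately show ?thesis by simp
qed

lemma even_dg: "finite V \<Longrightarrow> gr V H \<Longrightarrow> even (sum (dg H) V)"
proof -
  assume a: "finite V" "gr V H"
  have "finite H" using a unfolding gr_def by (meson finite_SigmaI finite_subset)
  then show ?thesis using sum_dg_V[OF a] even_sym a(2) unfolding gr_def by metis
qed

lemma dg_pos: "finite V \<Longrightarrow> gr V H \<Longrightarrow> (a,b)\<in>H \<Longrightarrow> dg H a \<ge> 1"
  unfolding dg_def using nb_fin[of V H a] by (metis One_nat_def Suc_leI card_gt_0_iff empty_iff mem_Collect_eq nb_def)

lemma exists_u:
  assumes "finite V" "gr V H" "dg H r < dg H i"
  obtains u where "(i,u)\<in>H" "u\<noteq>r" "(r,u)\<notin>H"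
proof -
  have "\<not> (\<forall>u\<in>nb H i. u\<noteq>r \<longrightarrow> u \<in> nb H r)" using dg_compare[OF assms(1,2)] assms(3) by fastforce
  then show ?thesis using that unfolding nb_def by blast
qed



lemma dg_two: "finite V \<Longrightarrow> gr V H \<Longrightarrow> (x,a)\<in>H \<Longrightarrow> (x,b)\<in>H \<Longrightarrow> a\<noteq>b \<Longrightarrow> dg H x \<ge> 2"
proof -
  assume a: "finite V" "gr V H" "(x,a)\<in>H" "(x,b)\<in>H" "a\<noteq>b"
  have "card {a,b} \<le> dg H x" unfolding dg_def using a nb_fin[OF a(1,2)] by (intro card_mono) (auto simp: nb_def)
  then show ?thesis using a by simp
qed

lemma step:
  assumes fin: "finite V" and eg: "EG V f" and ev: "even (sum f V)"
    and g: "gr V H" and le: "\<forall>v\<in>V. dg H v \<le> f v" and sat: "\<forall>v\<in>P. dg H v = f v"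
    and PV: "P \<subseteq> V" and rV: "r\<in>V" and rP: "r\<notin>P" and defi: "dg H r < f r"
    and ord: "\<forall>i\<in>P. f r \<le> f i"
  shows "\<exists>H'. gr V H' \<and> (\<forall>v\<in>V. dg H' v \<le> f v) \<and> (\<forall>v\<in>P. dg H' v = f v) \<and> dg H r < dg H' r"
proof -
  define Q where "Q = V - P - {r}"
  have gin: "\<And>a b. (a,b)\<in>H \<Longrightarrow> a\<in>V \<and> b\<in>V" using gr_in[OF g] by blast
  have gsym: "\<And>a b. (a,b)\<in>H \<Longrightarrow> (b,a)\<in>H" using gr_sym[OF g] by blast
  have girr: "\<And>a b. (a,b)\<in>H \<Longrightarrow> a\<noteq>b" using gr_irr[OF g] by blast
  have dpos: "\<And>a b. (a,b)\<in>H \<Longrightarrow> dg H a \<ge> 1" using dg_pos[OF fin g] by blast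
  have big: "\<And>i. i\<in>P \<Longrightarrow> dg H r < dg H i" using sat ord defi by fastforce
  note simps = gr_add gr_del dg_add[OF fin] dg_del[OF fin]
  show ?thesis
  proof (cases "\<exists>i\<in>P. (r,i)\<notin>H")
    case True
    then obtain i where iP: "i\<in>P" and ri: "(r,i)\<notin>H" by blast
    obtain u where iu: "(i,u)\<in>H" and ur: "u\<noteq>r" and ru: "(r,u)\<notin>H"
      using exists_u[OF fin g big[OF iP]] by blast
    have iV: "i\<in>V" "u\<in>V" "i\<noteq>r" "i\<noteq>u" using iP PV iu gin girr rP by auto
    show ?thesis
    proof (cases "dg H r + 2 \<le> f r")
      case True
      define H' where "H' = addE (addE (delE H i u) r i) r u"
      have gH: "gr V H'" unfolding H'_def using g iV rV ur by (simp add: simps)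
      have dH: "\<And>v. dg H' v = (if v = r then dg H r + 2 else dg H v)"
        unfolding H'_def using g iV rV ur ri ru iu dpos[OF iu] dpos[OF gsym[OF iu]]
        by (auto simp: simps)
      show ?thesis using gH dH le sat True rP by (intro exI[of _ H']) auto
    next
      case False
      then have d1: "f r = dg H r + 1" using defi by simp
      show ?thesis
      proof (cases "\<exists>k\<in>Q. (r,k)\<in>H")
        case True
        then obtain k where kQ: "k\<in>Q" and rk: "(r,k)\<in>H" by blast
        have kV: "k\<in>V" "k\<noteq>i" "k\<noteq>u" "k\<noteq>r" "k\<notin>P" using kQ iP ru rk unfolding Q_def by auto
        define H' where "H' = addE (addE (delE (delE H i u) r k) r i) r u"
        have gH: "gr V H'" unfolding H'_def using g iV rV ur by (simp add: simps)
        have dH: "\<And>v. dg H' v = (if v = r then dg H r + 1 else if v = k then dg H k - 1 else dg H v)"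
          unfolding H'_def using g iV rV kV ur ri ru iu rk dpos[OF iu] dpos[OF gsym[OF iu]] dpos[OF gsym[OF rk]] dpos[OF rk]
          by (auto simp: simps)
        show ?thesis using gH dH le sat d1 rP kV by (intro exI[of _ H']) fastforce
      next
        case False
        have "\<exists>k\<in>Q. dg H k < f k"
        proof (rule ccontr)
          assume "\<not> ?thesis"
          then have nq: "\<forall>v\<in>V. v\<noteq>r \<longrightarrow> v\<notin>P \<longrightarrow> \<not> dg H v < f v" unfolding Q_def by blast
          have "\<forall>v\<in>V. f v = dg H v + (if v = r then 1 else 0)"
          proof
            fix v assume v: "v\<in>V"
            show "f v = dg H v + (if v = r then 1 else 0)"
              using nq v le sat d1 by (cases "v=r"; cases "v\<in>P") (auto simp: not_less intro: antisym)
          qed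
          then have "sum f V = sum (\<lambda>v. dg H v + (if v = r then 1 else 0)) V" by simp
          also have "\<dots> = sum (dg H) V + 1" using fin rV by (simp add: sum.distrib)
          finally show False using ev even_dg[OF fin g] by simp
        qed
        then obtain k where kQ: "k\<in>Q" and kd: "dg H k < f k" by blast
        have kV: "k\<in>V" "k\<noteq>r" "k\<notin>P" "(r,k)\<notin>H" using kQ False unfolding Q_def by auto
        define H' where "H' = addE H r k"
        have gH: "gr V H'" unfolding H'_def using g kV rV by (simp add: simps)
        have dH: "\<And>v. dg H' v = (if v = r \<or> v = k then dg H v + 1 else dg H v)"
          unfolding H'_def using g kV rV by (auto simp: simps)
        show ?thesis using gH dH le sat defi kd rP kV by (intro exI[of _ H']) fastforce
      qed
    qed
  next
    case False
    then have rAll: "\<forall>i\<in>P. (r,i)\<in>H" by blast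
    show ?thesis
    proof (cases "\<exists>a\<in>P. \<exists>b\<in>P. a\<noteq>b \<and> (a,b)\<notin>H")
      case True
      then obtain a b where aP: "a\<in>P" and bP: "b\<in>P" and ab: "a\<noteq>b" "(a,b)\<notin>H" by blast
      obtain u where au: "(a,u)\<in>H" and ur: "u\<noteq>r" and ru: "(r,u)\<notin>H"
        using exists_u[OF fin g big[OF aP]] by blast
      have fP: "finite P" using fin PV finite_subset by blast
      have "\<exists>w\<in>Q. (b,w)\<in>H"
      proof (rule ccontr)
        assume nw: "\<not> ?thesis"
        have "nb H b \<subseteq> insert r (P - {a,b})"
        proof
          fix w assume "w \<in> nb H b"
          then have w: "(b,w)\<in>H" unfolding nb_def by simp
          then have "w\<in>V" "w\<noteq>b" "w\<noteq>a" using gin girr ab gsym by blast+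
          then show "w \<in> insert r (P - {a,b})" using nw w unfolding Q_def by blast
        qed
        then have "dg H b \<le> card (insert r (P - {a,b}))" unfolding dg_def using fP by (intro card_mono) auto
        also have "\<dots> \<le> Suc (card (P - {a,b}))" using fP by (simp add: card_insert_le_m1 card_insert_if)
        also have "card (P - {a,b}) = card P - 2" using aP bP ab fP by (subst card_Diff_subset) auto
        finally have c1: "dg H b \<le> Suc (card P - 2)" .
        have "card P \<le> dg H r" unfolding dg_def using rAll nb_fin[OF fin g, of r]
          by (intro card_mono) (auto simp: nb_def)
        moreover have "card P \<ge> 2"
        proof -
          have "card {a,b} \<le> card P" using aP bP fP by (intro card_mono) auto
          then show ?thesis using ab by simp
        qed
        ultimately show False using c1 big[OF bP] by linarith
      qed
      then obtain w where wQ: "w\<in>Q" and bw: "(b,w)\<in>H" by blast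
      have fa: "a\<in>V" "b\<in>V" "u\<in>V" "w\<in>V" "a\<noteq>r" "b\<noteq>r" "a\<noteq>u" "b\<noteq>u" "w\<noteq>a" "w\<noteq>b" "w\<noteq>r" "w\<notin>P"
        using aP bP PV rP au gin girr wQ ab unfolding Q_def by auto
      have d2: "w = u \<Longrightarrow> dg H u \<ge> 2" using dg_two[OF fin g gsym[OF au], of b] gsym[OF bw] ab by blast
      define H' where "H' = addE (addE (delE (delE H a u) b w) r u) a b"
      have gH: "gr V H'" unfolding H'_def using g fa rV ur ab by (simp add: simps)
      have dH: "\<And>v. dg H' v = (if v = r then dg H r + 1 else if v = w then dg H w - 1 else dg H v)"
        unfolding H'_def using g fa rV ur ru au bw ab dpos[OF au] dpos[OF gsym[OF au]]
          dpos[OF bw] dpos[OF gsym[OF bw]] d2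
        by (auto simp: simps)
      show ?thesis using gH dH le sat defi rP fa by (intro exI[of _ H']) fastforce
    next
      case False
      then have cl: "\<forall>a\<in>P. \<forall>b\<in>P. a\<noteq>b \<longrightarrow> (a,b)\<in>H" by blast
      show ?thesis
      proof (cases "\<exists>k\<in>Q. (k,r)\<notin>H \<and> dg H k < f k")
        case True
        then obtain k where kQ: "k\<in>Q" and kr: "(k,r)\<notin>H" and kd: "dg H k < f k" by blast
        have kV: "k\<in>V" "k\<noteq>r" "k\<notin>P" "(r,k)\<notin>H" using kQ kr gsym unfolding Q_def by auto
        define H' where "H' = addE H r k"
        have gH: "gr V H'" unfolding H'_def using g kV rV by (simp add: simps)
        have dH: "\<And>v. dg H' v = (if v = r \<or> v = k then dg H v + 1 else dg H v)"
          unfolding H'_def using g kV rV by (auto simp: simps)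
        show ?thesis using gH dH le sat defi kd rP kV by (intro exI[of _ H']) fastforce
      next
        case F1: False
        show ?thesis
        proof (cases "\<exists>k\<in>Q. \<exists>w\<in>Q. (k,r)\<notin>H \<and> (k,w)\<in>H")
          case True
          then obtain k w where kQ: "k\<in>Q" and wQ: "w\<in>Q" and kr: "(k,r)\<notin>H" and kw: "(k,w)\<in>H" by blast
          have kV: "k\<in>V" "k\<noteq>r" "k\<notin>P" "(r,k)\<notin>H" "w\<in>V" "w\<noteq>r" "w\<notin>P" "w\<noteq>k"
            using kQ wQ kr gsym girr[OF kw] unfolding Q_def by auto
          define H' where "H' = addE (delE H k w) r k"
          have gH: "gr V H'" unfolding H'_def using g kV rV by (simp add: simps)
          have dH: "\<And>v. dg H' v = (if v = r then dg H r + 1 else if v = w then dg H w - 1 else dg H v)"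
            unfolding H'_def using g kV rV kw dpos[OF kw] dpos[OF gsym[OF kw]] by (auto simp: simps)
          show ?thesis using gH dH le sat defi rP kV by (intro exI[of _ H']) fastforce
        next
          case F2: False
          show ?thesis
          proof (cases "\<exists>k\<in>Q. \<exists>i\<in>P. (k,r)\<in>H \<and> (k,i)\<notin>H \<and> dg H k < f k")
            case True
            then obtain k i where kQ: "k\<in>Q" and iP: "i\<in>P" and kr: "(k,r)\<in>H" and ki: "(k,i)\<notin>H"
              and kd: "dg H k < f k" by blast
            obtain u where iu: "(i,u)\<in>H" and ur: "u\<noteq>r" and ru: "(r,u)\<notin>H"
              using exists_u[OF fin g big[OF iP]] by blast
            have fa: "k\<in>V" "k\<noteq>r" "k\<notin>P" "i\<in>V" "u\<in>V" "i\<noteq>k" "u\<noteq>k" "(i,k)\<notin>H" "u\<notin>P" "i\<noteq>u" "i\<noteq>r"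
              using kQ iP PV kr ki iu ru gin gsym girr rAll rP unfolding Q_def by auto
            define H' where "H' = addE (addE (delE H i u) i k) r u"
            have gH: "gr V H'" unfolding H'_def using g fa rV ur by (simp add: simps)
            have dH: "\<And>v. dg H' v = (if v = r \<or> v = k then dg H v + 1 else dg H v)"
              unfolding H'_def using g fa rV ur ru iu dpos[OF iu] dpos[OF gsym[OF iu]]
              by (auto simp: simps)
            show ?thesis using gH dH le sat defi kd rP fa by (intro exI[of _ H']) fastforce
          next
            case F3: False
            show ?thesis
            proof (cases "\<exists>k\<in>Q. \<exists>i\<in>P. \<exists>w\<in>Q. (k,r)\<in>H \<and> (k,i)\<notin>H \<and> (k,w)\<in>H")
              case True
              then obtain k i w where kQ: "k\<in>Q" and iP: "i\<in>P" and wQ: "w\<in>Q" and kr: "(k,r)\<in>H"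
                and ki: "(k,i)\<notin>H" and kw: "(k,w)\<in>H" by blast
              obtain u where iu: "(i,u)\<in>H" and ur: "u\<noteq>r" and ru: "(r,u)\<notin>H"
                using exists_u[OF fin g big[OF iP]] by blast
              have fa: "k\<in>V" "k\<noteq>r" "k\<notin>P" "i\<in>V" "u\<in>V" "i\<noteq>k" "u\<noteq>k" "(i,k)\<notin>H" "u\<notin>P"
                "i\<noteq>u" "i\<noteq>r" "w\<in>V" "w\<noteq>r" "w\<notin>P" "w\<noteq>k" "w\<noteq>i"
                using kQ iP wQ PV kr ki kw iu ru gin gsym girr rAll rP unfolding Q_def by auto
              have d2: "w = u \<Longrightarrow> dg H u \<ge> 2" using dg_two[OF fin g gsym[OF iu], of k] gsym[OF kw] fa by blast
              define H' where "H' = addE (addE (delE (delE H i u) k w) i k) r u"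
              have gH: "gr V H'" unfolding H'_def using g fa rV ur by (simp add: simps)
              have dH: "\<And>v. dg H' v = (if v = r then dg H r + 1 else if v = w then dg H w - 1 else dg H v)"
                unfolding H'_def using g fa rV ur ru iu kw dpos[OF iu] dpos[OF gsym[OF iu]]
                  dpos[OF kw] dpos[OF gsym[OF kw]] d2
                by (auto simp: simps)
              show ?thesis using gH dH le sat defi rP fa by (intro exI[of _ H']) fastforce
            next
              case F4: False
              have Qc: "\<forall>k\<in>V-P-{r}. (\<forall>x\<in>insert r P. (k,x)\<in>H) \<or> (dg H k = f k \<and> (\<forall>w\<in>V-P-{r}. (k,w)\<notin>H))"
              proof
                fix k assume kQ: "k \<in> V-P-{r}"
                show "(\<forall>x\<in>insert r P. (k,x)\<in>H) \<or> (dg H k = f k \<and> (\<forall>w\<in>V-P-{r}. (k,w)\<notin>H))"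
                proof (cases "(k,r)\<in>H")
                  case False
                  then show ?thesis using F1 F2 kQ le unfolding Q_def by (auto intro: antisym simp: not_less)
                next
                  case True
                  show ?thesis
                  proof (cases "\<forall>i\<in>P. (k,i)\<in>H")
                    case True
                    then show ?thesis using \<open>(k,r)\<in>H\<close> by blast
                  next
                    case False
                    then have "f k \<le> dg H k" "\<forall>w\<in>V-P-{r}. (k,w)\<notin>H"
                      using F3 F4 kQ \<open>(k,r)\<in>H\<close> unfolding Q_def by (auto simp: not_less)
                    moreover have "dg H k \<le> f k" using le kQ by blast
                    ultimately show ?thesis by simp
                  qed
                qed
              qed
              have "\<not> EG V f" by (rule stuck[OF fin g PV rV rP sat defi rAll cl Qc])
              then show ?thesis using eg by blast
            qed
          qed
        qed
      qed
    qed
  qed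
qed



lemma fill:
  assumes fin: "finite V" and eg: "EG V f" and ev: "even (sum f V)"
    and PV: "P \<subseteq> V" and rV: "r\<in>V" and rP: "r\<notin>P" and ord: "\<forall>i\<in>P. f r \<le> f i"
  shows "gr V H \<Longrightarrow> (\<forall>v\<in>V. dg H v \<le> f v) \<Longrightarrow> (\<forall>v\<in>P. dg H v = f v) \<Longrightarrow>
    \<exists>H'. gr V H' \<and> (\<forall>v\<in>V. dg H' v \<le> f v) \<and> (\<forall>v\<in>insert r P. dg H' v = f v)"
proof (induction "f r - dg H r" arbitrary: H rule: less_induct)
  case less
  show ?case
  proof (cases "dg H r < f r")
    case False
    then have "dg H r = f r" using less.prems rV by (simp add: not_less antisym)
    then show ?thesis using less.prems by (intro exI[of _ H]) auto
  next
    case True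
    obtain H1 where h1: "gr V H1" "\<forall>v\<in>V. dg H1 v \<le> f v" "\<forall>v\<in>P. dg H1 v = f v" "dg H r < dg H1 r"
      using step[OF fin eg ev less.prems(1,2,3) PV rV rP True ord] by blast
    have "f r - dg H1 r < f r - dg H r" using h1(2,4) rV True by fastforce
    then show ?thesis using less.hyps h1(1,2,3) by blast
  qed
qed

lemma realize:
  assumes fin: "finite V" and eg: "EG V f" and ev: "even (sum f V)"
  shows "\<exists>H. gr V H \<and> (\<forall>v\<in>V. dg H v = f v)"
proof -
  have main: "\<forall>P. P \<subseteq> V \<and> card P = n \<and> (\<forall>i\<in>P. \<forall>k\<in>V-P. f k \<le> f i) \<longrightarrow>
     (\<exists>H. gr V H \<and> (\<forall>v\<in>V. dg H v \<le> f v) \<and> (\<forall>v\<in>P. dg H v = f v))" for n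
  proof (induction n)
    case 0
    show ?case
    proof (intro allI impI)
      fix P assume "P \<subseteq> V \<and> card P = 0 \<and> (\<forall>i\<in>P. \<forall>k\<in>V-P. f k \<le> f i)"
      then have "P = {}" using finite_subset[OF _ fin] card_0_eq by blast
      moreover have "gr V {}" unfolding gr_def by simp
      moreover have "\<forall>v. dg ({}::('a\<times>'a) set) v = 0" unfolding dg_def nb_def by simp
      ultimately show "\<exists>H. gr V H \<and> (\<forall>v\<in>V. dg H v \<le> f v) \<and> (\<forall>v\<in>P. dg H v = f v)"
        by (intro exI[of _ "{}"]) auto
    qed
  next
    case (Suc n)
    show ?case
    proof (intro allI impI)
      fix P assume A: "P \<subseteq> V \<and> card P = Suc n \<and> (\<forall>i\<in>P. \<forall>k\<in>V-P. f k \<le> f i)"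
      have fP: "finite P" using A finite_subset[OF _ fin] by blast
      have ne: "P \<noteq> {}" using A by auto
      obtain r where rP: "r\<in>P" and rmin: "\<forall>i\<in>P. f r \<le> f i"
      proof -
        have "Min (f ` P) \<in> f ` P" using fP ne by simp
        then obtain r where "r\<in>P" "f r = Min (f ` P)" by auto
        moreover have "\<forall>i\<in>P. Min (f ` P) \<le> f i" using fP by simp
        ultimately show ?thesis using that by metis
      qed
      define P' where "P' = P - {r}"
      have A': "P' \<subseteq> V \<and> card P' = n \<and> (\<forall>i\<in>P'. \<forall>k\<in>V-P'. f k \<le> f i)"
      proof (intro conjI)
        show "P' \<subseteq> V" using A unfolding P'_def by blast
        show "card P' = n" using A rP fP unfolding P'_def by simp
        show "\<forall>i\<in>P'. \<forall>k\<in>V-P'. f k \<le> f i"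
        proof (intro ballI)
          fix i k assume i: "i\<in>P'" and k: "k\<in>V-P'"
          show "f k \<le> f i"
          proof (cases "k = r")
            case True then show ?thesis using rmin i unfolding P'_def by blast
          next
            case False then show ?thesis using A i k unfolding P'_def by blast
          qed
        qed
      qed
      obtain H where H: "gr V H" "\<forall>v\<in>V. dg H v \<le> f v" "\<forall>v\<in>P'. dg H v = f v"
        using Suc.IH[rule_format, OF A'] by blast
      have "\<exists>H'. gr V H' \<and> (\<forall>v\<in>V. dg H' v \<le> f v) \<and> (\<forall>v\<in>insert r P'. dg H' v = f v)"
      proof (rule fill[OF fin eg ev _ _ _ _ H])
        show "P' \<subseteq> V" "r \<in> V" "r \<notin> P'" "\<forall>i\<in>P'. f r \<le> f i"
          using A rP rmin unfolding P'_def by blast+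
      qed
      moreover have "insert r P' = P" using rP unfolding P'_def by auto
      ultimately show "\<exists>H. gr V H \<and> (\<forall>v\<in>V. dg H v \<le> f v) \<and> (\<forall>v\<in>P. dg H v = f v)" by simp
    qed
  qed
  have "V \<subseteq> V \<and> card V = card V \<and> (\<forall>i\<in>V. \<forall>k\<in>V-V. f k \<le> f i)" by simp
  then have "\<exists>H. gr V H \<and> (\<forall>v\<in>V. dg H v \<le> f v) \<and> (\<forall>v\<in>V. dg H v = f v)"
    using main[of "card V"] by (rule_tac mp[OF spec[OF main[of "card V"]]]) 
  then show ?thesis by blast
qed


lemma necessary:
  assumes fin: "finite V" and g: "gr V H"
  shows "EG V (dg H)"
  unfolding EG_def
proof (intro allI impI)
  fix X Y Z assume p: "X \<union> Y \<union> Z = V \<and> X\<inter>Y={} \<and> X\<inter>Z={} \<and> Y\<inter>Z={}"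
  have fX: "finite X" "finite Y" "finite Z" using p fin by (metis finite_Un)+
  have fnb: "\<forall>x. finite (nb H x)" using nb_fin[OF fin g] by blast
  define D where "D = {(x,y). x\<in>X \<and> y\<in>X \<and> x\<noteq>y}"
  define S where "S = (\<lambda>(a,b). (b,a)) ` Sigma Y (nb H)"
  have sub: "Sigma X (nb H) \<subseteq> D \<union> (X\<times>Z) \<union> S"
  proof
    fix q assume q: "q \<in> Sigma X (nb H)"
    obtain a b where ab: "q = (a,b)" by fastforce
    have a: "a\<in>X" "(a,b)\<in>H" using q ab unfolding nb_def by auto
    have b: "b \<in> V" "a\<noteq>b" using a gr_in[OF g] gr_irr[OF g] by blast+
    have "(b,a)\<in>H" using gr_sym[OF g a(2)] .
    then show "q \<in> D \<union> (X\<times>Z) \<union> S" using a b p ab unfolding D_def S_def nb_def by (auto simp: image_iff)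
  qed
  have fD: "finite D" unfolding D_def by (rule finite_subset[of _ "X\<times>X"]) (use fX in auto)
  have fS: "finite S" unfolding S_def using fX fnb by auto
  have "sum (dg H) X = card (Sigma X (nb H))" using sum_dg fX fnb by metis
  also have "\<dots> \<le> card (D \<union> (X\<times>Z) \<union> S)" using sub fD fS fX by (intro card_mono) auto
  also have "\<dots> \<le> card D + card (X\<times>Z) + card S" by (meson card_Un_le le_trans add_le_mono order_refl)
  also have "card S \<le> card (Sigma Y (nb H))" unfolding S_def using card_image_le fX fnb by blast
  also have "card (Sigma Y (nb H)) = sum (dg H) Y" using sum_dg fX fnb by metis
  finally show "sum (dg H) X \<le> card X * (card X - 1) + card X * card Z + sum (dg H) Y"
    using offdiag_card[OF fX(1)] unfolding D_def by (simp add: card_cartesian_product)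
qed



lemma pa[simp]: "path_arcs (u,v,w) = {(u,v),(v,w)}" unfolding path_arcs_def by simp

lemma tour_facts:
  assumes "tournament V A"
  shows "finite V" "A \<subseteq> V\<times>V" "\<And>v. (v,v)\<notin>A" "\<And>u v. (u,v)\<in>A \<Longrightarrow> (v,u)\<notin>A"
    "\<And>u v. u\<in>V \<Longrightarrow> v\<in>V \<Longrightarrow> u\<noteq>v \<Longrightarrow> (u,v)\<notin>A \<Longrightarrow> (v,u)\<in>A"
  using assms unfolding tournament_def by (blast, blast, blast, fastforce, blast)

lemma dec_to_real:
  assumes t: "tournament V A" and d: "P3_decomposition A P"
  shows "\<exists>H. gr V H \<and> (\<forall>v\<in>V. dg H v = dg A v)"
proof -
  note tf = tour_facts[OF t]
  have P1: "\<And>u v w. (u,v,w)\<in>P \<Longrightarrow> (u,v)\<in>A \<and> (v,w)\<in>A" using d unfolding P3_decomposition_def by blast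
  have e1: "\<And>e. e\<in>A \<Longrightarrow> \<exists>!p. p\<in>P \<and> e\<in>path_arcs p"
    using d unfolding P3_decomposition_def by blast
  have uq: "\<And>e p1 p2. e\<in>A \<Longrightarrow> p1\<in>P \<Longrightarrow> p2\<in>P \<Longrightarrow> e\<in>path_arcs p1 \<Longrightarrow> e\<in>path_arcs p2 \<Longrightarrow> p1=p2"
  proof -
    fix e p1 p2 assume a: "e\<in>A" "p1\<in>P" "p2\<in>P" "e\<in>path_arcs p1" "e\<in>path_arcs p2"
    obtain q where "\<forall>y. y\<in>P \<and> e\<in>path_arcs y \<longrightarrow> y = q" using e1[OF a(1)] by blast
    then show "p1 = p2" using a by blast
  qed
  have ex: "\<And>e. e\<in>A \<Longrightarrow> \<exists>p\<in>P. e\<in>path_arcs p"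
    using e1 by blast
  define F where "F = {(u,v). \<exists>w. (u,v,w)\<in>P}"
  define H where "H = F \<union> converse F"
  have FA: "F \<subseteq> A" unfolding F_def using P1 by auto
  have gH: "gr V H" unfolding gr_def H_def using FA tf(2,3) by auto
  have "\<forall>v\<in>V. dg H v = dg A v"
  proof
    fix v assume vV: "v\<in>V"
    define I where "I = {u. (u,v)\<in>F}"
    define Ou where "Ou = {w. (v,w)\<in>A \<and> (v,w)\<notin>F}"
    define Fo where "Fo = {w. (v,w)\<in>F}"
    have "I \<subseteq> V" "Ou \<subseteq> V" "Fo \<subseteq> V" unfolding I_def Ou_def Fo_def using FA tf(2) by auto
    then have fin: "finite I" "finite Ou" "finite Fo" using finite_subset[OF _ tf(1)] by blast+
    define phi where "phi u = (SOME w. (u,v,w)\<in>P)" for u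
    have phi1: "\<And>u. u\<in>I \<Longrightarrow> (u,v,phi u)\<in>P"
    proof -
      fix u assume "u\<in>I"
      then obtain w where "(u,v,w)\<in>P" unfolding I_def F_def by blast
      then show "(u,v,phi u)\<in>P" unfolding phi_def by (rule someI)
    qed
    have bij: "bij_betw phi I Ou"
    proof (rule bij_betw_imageI)
      show "inj_on phi I"
      proof (rule inj_onI)
        fix u1 u2 assume u: "u1\<in>I" "u2\<in>I" "phi u1 = phi u2"
        have "(v, phi u1) \<in> A" using P1 phi1 u by blast
        moreover have "(u1,v,phi u1)\<in>P" "(u2,v,phi u2)\<in>P" using phi1 u by blast+
        ultimately have "(u1,v,phi u1) = (u2,v,phi u2)" using uq[of "(v,phi u1)" "(u1,v,phi u1)" "(u2,v,phi u2)"] u(3) by simp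
        then show "u1 = u2" by simp
      qed
      show "phi ` I = Ou"
      proof
        show "phi ` I \<subseteq> Ou"
        proof
          fix w assume "w \<in> phi ` I"
          then obtain u where u: "u\<in>I" "w = phi u" by blast
          have p: "(u,v,w)\<in>P" using phi1 u by blast
          have vw: "(v,w)\<in>A" "(u,v)\<in>A" using P1 p by blast+
          have "(v,w)\<notin>F"
          proof
            assume "(v,w)\<in>F"
            then obtain x where "(v,w,x)\<in>P" unfolding F_def by blast
            then have "(u,v,w) = (v,w,x)" using uq[of "(v,w)" "(u,v,w)" "(v,w,x)"] p vw by simp
            then show False using vw tf(3) by auto
          qed
          then show "w\<in>Ou" using vw unfolding Ou_def by blast
        qed
        show "Ou \<subseteq> phi ` I"
        proof
          fix w assume w: "w\<in>Ou"
          then have vw: "(v,w)\<in>A" "(v,w)\<notin>F" unfolding Ou_def by blast+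
          obtain p where p: "p\<in>P" "(v,w)\<in>path_arcs p" using ex[OF vw(1)] by blast
          obtain x y z where xyz: "p = (x,y,z)" by (cases p) auto
          have "(v,w) \<noteq> (x,y)" using vw(2) p xyz unfolding F_def by auto
          then have "y = v" "z = w" using p xyz by auto
          then have xp: "(x,v,w)\<in>P" using p xyz by simp
          then have xI: "x\<in>I" unfolding I_def F_def by blast
          have "(x,v)\<in>A" using P1 xp by blast
          then have "(x,v,phi x) = (x,v,w)" using uq[of "(x,v)" "(x,v,phi x)" "(x,v,w)"] phi1[OF xI] xp by simp
          then show "w \<in> phi ` I" using xI by force
        qed
      qed
    qed
    then have cIO: "card I = card Ou" by (rule bij_betw_same_card)
    have e1: "nb H v = Fo \<union> I" unfolding nb_def H_def Fo_def I_def by auto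
    have d1: "Fo \<inter> I = {}" unfolding Fo_def I_def using FA tf(4) by auto
    have e2: "nb A v = Fo \<union> Ou" unfolding nb_def Fo_def Ou_def using FA by auto
    have d2: "Fo \<inter> Ou = {}" unfolding Fo_def Ou_def by auto
    show "dg H v = dg A v" unfolding dg_def e1 e2
      using card_Un_disjoint[OF fin(3,1) d1] card_Un_disjoint[OF fin(3,2) d2] cIO by simp
  qed
  then show ?thesis using gH by blast
qed



lemma real_to_dec:
  assumes t: "tournament V A" and g: "gr V H" and dH: "\<forall>v\<in>V. dg H v = dg A v"
  shows "has_P3_decomposition A"
proof -
  note tf = tour_facts[OF t]
  have gsym: "\<And>a b. (a,b)\<in>H \<Longrightarrow> (b,a)\<in>H" using gr_sym[OF g] by blast
  have gin: "\<And>a b. (a,b)\<in>H \<Longrightarrow> a\<in>V \<and> b\<in>V \<and> a\<noteq>b" using gr_in[OF g] gr_irr[OF g] by blast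
  define I where "I v = {u. (u,v)\<in>A \<and> (u,v)\<in>H}" for v
  define Ou where "Ou v = {w. (v,w)\<in>A \<and> (v,w)\<notin>H}" for v
  have cIO: "card (I v) = card (Ou v)" for v
  proof (cases "v\<in>V")
    case False
    then have "I v = {}" "Ou v = {}" unfolding I_def Ou_def using tf(2) by auto
    then show ?thesis by simp
  next
    case vV: True
    define Fo where "Fo = {w. (v,w)\<in>A \<and> (v,w)\<in>H}"
    have "I v \<subseteq> V" "Ou v \<subseteq> V" "Fo \<subseteq> V" unfolding I_def Ou_def Fo_def using tf(2) by auto
    then have fin: "finite (I v)" "finite (Ou v)" "finite Fo" using finite_subset[OF _ tf(1)] by blast+
    have e1: "nb H v = Fo \<union> I v"
    proof
      show "nb H v \<subseteq> Fo \<union> I v"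
      proof
        fix w assume "w \<in> nb H v"
        then have w: "(v,w)\<in>H" unfolding nb_def by simp
        then have "w\<in>V" "v\<noteq>w" "(w,v)\<in>H" using gin gsym by blast+
        then show "w \<in> Fo \<union> I v" using tf(5)[OF vV] w unfolding Fo_def I_def by blast
      qed
      show "Fo \<union> I v \<subseteq> nb H v" unfolding Fo_def I_def nb_def using gsym by blast
    qed
    have d1: "Fo \<inter> I v = {}" unfolding Fo_def I_def using tf(4) by blast
    have e2: "nb A v = Fo \<union> Ou v" unfolding nb_def Fo_def Ou_def by blast
    have d2: "Fo \<inter> Ou v = {}" unfolding Fo_def Ou_def by blast
    have "dg H v = dg A v" using dH vV by blast
    then show ?thesis unfolding dg_def e1 e2
      using card_Un_disjoint[OF fin(3,1) d1] card_Un_disjoint[OF fin(3,2) d2] by simp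
  qed
  have fI: "finite (I v)" "finite (Ou v)" for v
  proof -
    have "I v \<subseteq> V" "Ou v \<subseteq> V" unfolding I_def Ou_def using tf(2) by auto
    then show "finite (I v)" "finite (Ou v)" using finite_subset[OF _ tf(1)] by blast+
  qed
  define gg where "gg v = (SOME h. bij_betw h (I v) (Ou v))" for v
  have bj: "bij_betw (gg v) (I v) (Ou v)" for v
  proof -
    obtain h where "bij_betw h (I v) (Ou v)" using finite_same_card_bij[OF fI cIO] by blast
    then show ?thesis unfolding gg_def by (rule someI[where P="\<lambda>h. bij_betw h (I v) (Ou v)"])
  qed
  define P where "P = {(u,v,w). u \<in> I v \<and> w = gg v u}"
  have inI: "\<And>u v. u \<in> I v \<Longrightarrow> gg v u \<in> Ou v" using bj bij_betwE by blast
  have c1: "(u,v)\<in>A \<and> (v,w)\<in>A \<and> (u,v)\<noteq>(v,w)" if "(u,v,w)\<in>P" for u v w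
  proof -
    have u: "u \<in> I v" "w = gg v u" using that unfolding P_def by auto
    then have "gg v u \<in> Ou v" using inI by blast
    then show ?thesis using u tf(3) unfolding I_def Ou_def by auto
  qed
  have c2: "\<forall>e\<in>A. \<exists>!p. p \<in> P \<and> e \<in> path_arcs p"
  proof
    fix e assume eA: "e\<in>A"
    obtain a b where ab: "e = (a,b)" by fastforce
    show "\<exists>!p. p \<in> P \<and> e \<in> path_arcs p"
    proof (cases "(a,b)\<in>H")
      case True
      then have aI: "a \<in> I b" unfolding I_def using eA ab by simp
      have mem: "(a,b,gg b a) \<in> P" unfolding P_def using aI by simp
      show ?thesis
      proof (rule ex1I[of _ "(a,b,gg b a)"])
        show "(a,b,gg b a) \<in> P \<and> e \<in> path_arcs (a,b,gg b a)" using mem ab by simp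
      next
        fix p assume p: "p \<in> P \<and> e \<in> path_arcs p"
        obtain x y z where xyz: "p = (x,y,z)" by (cases p) auto
        have xI: "x \<in> I y" "z = gg y x" using p xyz unfolding P_def by auto
        have zO: "z \<in> Ou y" using inI xI by blast
        have "(a,b) = (x,y) \<or> (a,b) = (y,z)" using p xyz ab by auto
        moreover have "(a,b) \<noteq> (y,z)" using zO True unfolding Ou_def by auto
        ultimately have "a = x" "b = y" by auto
        then show "p = (a,b,gg b a)" using xyz xI by simp
      qed
    next
      case False
      then have bO: "b \<in> Ou a" unfolding Ou_def using eA ab by simp
      then obtain u where uI: "u \<in> I a" and gu: "gg a u = b" using bj[of a]
        by (metis bij_betw_imp_surj_on imageE)
      have mem: "(u,a,b) \<in> P" unfolding P_def using uI gu by simp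
      show ?thesis
      proof (rule ex1I[of _ "(u,a,b)"])
        show "(u,a,b) \<in> P \<and> e \<in> path_arcs (u,a,b)" using mem ab by simp
      next
        fix p assume p: "p \<in> P \<and> e \<in> path_arcs p"
        obtain x y z where xyz: "p = (x,y,z)" by (cases p) auto
        have xI: "x \<in> I y" "z = gg y x" using p xyz unfolding P_def by auto
        have "(a,b) = (x,y) \<or> (a,b) = (y,z)" using p xyz ab by auto
        moreover have "(a,b) \<noteq> (x,y)" using xI False unfolding I_def by auto
        ultimately have "a = y" "b = z" by auto
        then have "x \<in> I a" "gg a x = b" using xI by auto
        then have "x = u" using uI gu bj[of a] unfolding bij_betw_def inj_on_def by metis
        then show "p = (u,a,b)" using xyz \<open>a = y\<close> \<open>b = z\<close> by simp
      qed
    qed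
  qed
  have P3: "P3_decomposition A P" unfolding P3_decomposition_def using c1 c2 by blast
  then show ?thesis unfolding has_P3_decomposition_def by blast
qed



lemma ab_pair:
  assumes t: "tournament V A" and XV: "X \<subseteq> V" and YV: "Y \<subseteq> V"
  shows "arcs_between A X Y + arcs_between A Y X = card {(x,y). x\<in>X \<and> y\<in>Y \<and> x\<noteq>y}"
proof -
  note tf = tour_facts[OF t]
  define S1 where "S1 = {(x,y)\<in>A. x\<in>X \<and> y\<in>Y}"
  define S2 where "S2 = {(x,y)\<in>A. x\<in>Y \<and> y\<in>X}"
  define D where "D = {(x,y). x\<in>X \<and> y\<in>Y \<and> x\<noteq>y}"
  have fVV: "finite (V\<times>V)" using tf(1) by simp
  have f1: "finite S1" "finite S2" unfolding S1_def S2_def using tf(2)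
    by (auto intro: finite_subset[OF _ fVV])
  have u: "S1 \<union> (\<lambda>(a,b). (b,a)) ` S2 = D"
  proof
    show "S1 \<union> (\<lambda>(a,b). (b,a)) ` S2 \<subseteq> D" unfolding S1_def S2_def D_def using tf(3) by auto
    show "D \<subseteq> S1 \<union> (\<lambda>(a,b). (b,a)) ` S2"
    proof
      fix p assume p: "p\<in>D"
      obtain x y where xy: "p = (x,y)" by fastforce
      have h: "x\<in>X" "y\<in>Y" "x\<noteq>y" using p xy unfolding D_def by auto
      show "p \<in> S1 \<union> (\<lambda>(a,b). (b,a)) ` S2"
      proof (cases "(x,y)\<in>A")
        case True then show ?thesis using h xy unfolding S1_def by auto
      next
        case False
        then have "(y,x)\<in>A" using tf(5)[of x y] h XV YV by blast
        then have "(y,x)\<in>S2" using h unfolding S2_def by auto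
        then show ?thesis using xy by (auto simp: image_iff)
      qed
    qed
  qed
  have d: "S1 \<inter> (\<lambda>(a,b). (b,a)) ` S2 = {}" unfolding S1_def S2_def using tf(4) by auto
  have ci: "card ((\<lambda>(a,b). (b,a)) ` S2) = card S2" by (rule card_image) (auto simp: inj_on_def)
  have "card D = card S1 + card S2"
    using card_Un_disjoint[OF f1(1) _ d] f1(2) u ci by simp
  then show ?thesis unfolding arcs_between_def S1_def S2_def D_def by simp
qed

lemma sum_out:
  assumes t: "tournament V A" and p: "X \<union> Y \<union> Z = V" "X\<inter>Y={}" "X\<inter>Z={}" "Y\<inter>Z={}" and SV: "S \<subseteq> V"
  shows "sum (dg A) S = arcs_between A S X + arcs_between A S Y + arcs_between A S Z"
proof -
  note tf = tour_facts[OF t]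
  have fVV: "finite (V\<times>V)" using tf(1) by simp
  have fS: "finite S" using SV tf(1) finite_subset by blast
  have fnb: "\<forall>x\<in>S. finite (nb A x)" unfolding nb_def using tf(1,2) by (auto intro: finite_subset[OF _ tf(1)])
  have "sum (dg A) S = card (Sigma S (nb A))" using sum_dg[OF fS fnb] .
  also have "Sigma S (nb A) = {(x,y)\<in>A. x\<in>S \<and> y\<in>X} \<union> {(x,y)\<in>A. x\<in>S \<and> y\<in>Y} \<union> {(x,y)\<in>A. x\<in>S \<and> y\<in>Z}"
    unfolding nb_def using tf(2) p(1) by auto
  also have "card \<dots> = arcs_between A S X + arcs_between A S Y + arcs_between A S Z"
  proof -
    have f: "finite {(x,y)\<in>A. x\<in>S \<and> y\<in>X}" "finite {(x,y)\<in>A. x\<in>S \<and> y\<in>Y}" "finite {(x,y)\<in>A. x\<in>S \<and> y\<in>Z}"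
      using tf(2) by (auto intro: finite_subset[OF _ fVV])
    show ?thesis unfolding arcs_between_def
      by (subst card_Un_disjoint, use f p in auto)+
  qed
  finally show ?thesis .
qed

theorem theorem3p2:
  fixes V :: "'a set" and A :: "('a \<times> 'a) set"
  assumes "tournament V A"
    and "even (card A)"
  shows "has_P3_decomposition A \<longleftrightarrow>
    (\<forall>X Y Z. X \<union> Y \<union> Z = V \<and> X \<inter> Y = {} \<and> X \<inter> Z = {} \<and> Y \<inter> Z = {} \<longrightarrow>
       arcs_between A X Y \<le> arcs_between A Y X + arcs_between A X X + arcs_between A Y Y
         + arcs_between A Z X + arcs_between A Y Z)"
proof -
  note t = assms(1)
  note tf = tour_facts[OF t]
  have key: "(sum (dg A) X \<le> card X * (card X - 1) + card X * card Z + sum (dg A) Y) \<longleftrightarrow>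
      (arcs_between A X Y \<le> arcs_between A Y X + arcs_between A X X + arcs_between A Y Y
         + arcs_between A Z X + arcs_between A Y Z)"
    if p: "X \<union> Y \<union> Z = V" "X \<inter> Y = {}" "X \<inter> Z = {}" "Y \<inter> Z = {}" for X Y Z
  proof -
    have sub: "X \<subseteq> V" "Y \<subseteq> V" "Z \<subseteq> V" using p by auto
    have fX: "finite X" using sub tf(1) finite_subset by blast
    have s1: "sum (dg A) X = arcs_between A X X + arcs_between A X Y + arcs_between A X Z"
      using sum_out[OF t p sub(1)] .
    have s2: "sum (dg A) Y = arcs_between A Y X + arcs_between A Y Y + arcs_between A Y Z"
      using sum_out[OF t p sub(2)] .
    have xx: "arcs_between A X X + arcs_between A X X = card X * (card X - 1)"
      using ab_pair[OF t sub(1) sub(1)] offdiag_card[OF fX] by simp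
    have "{(x,y). x\<in>X \<and> y\<in>Z \<and> x\<noteq>y} = X \<times> Z" using p by auto
    then have xz: "arcs_between A X Z + arcs_between A Z X = card X * card Z"
      using ab_pair[OF t sub(1) sub(3)] by (simp add: card_cartesian_product)
    show ?thesis using s1 s2 xx xz by linarith
  qed
  have sumA: "sum (dg A) V = card A"
  proof -
    have fnb: "\<forall>x\<in>V. finite (nb A x)" unfolding nb_def using tf(2) by (auto intro: finite_subset[OF _ tf(1)])
    have "sum (dg A) V = card (Sigma V (nb A))" using sum_dg[OF tf(1) fnb] .
    also have "Sigma V (nb A) = A" unfolding nb_def using tf(2) by auto
    finally show ?thesis .
  qed
  show ?thesis
  proof
    assume "has_P3_decomposition A"
    then obtain P where "P3_decomposition A P" unfolding has_P3_decomposition_def by blast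
    then obtain H where H: "gr V H" "\<forall>v\<in>V. dg H v = dg A v" using dec_to_real[OF t] by blast
    have eg: "EG V (dg H)" using necessary[OF tf(1) H(1)] .
    show "\<forall>X Y Z. X \<union> Y \<union> Z = V \<and> X \<inter> Y = {} \<and> X \<inter> Z = {} \<and> Y \<inter> Z = {} \<longrightarrow>
       arcs_between A X Y \<le> arcs_between A Y X + arcs_between A X X + arcs_between A Y Y
         + arcs_between A Z X + arcs_between A Y Z"
    proof (intro allI impI)
      fix X Y Z assume p: "X \<union> Y \<union> Z = V \<and> X \<inter> Y = {} \<and> X \<inter> Z = {} \<and> Y \<inter> Z = {}"
      have "sum (dg H) X \<le> card X * (card X - 1) + card X * card Z + sum (dg H) Y"
        using eg p unfolding EG_def by blast
      moreover have "sum (dg H) X = sum (dg A) X" "sum (dg H) Y = sum (dg A) Y"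
        using H(2) p by (auto intro!: sum.cong)
      ultimately show "arcs_between A X Y \<le> arcs_between A Y X + arcs_between A X X + arcs_between A Y Y
         + arcs_between A Z X + arcs_between A Y Z" using key p by auto
    qed
  next
    assume c: "\<forall>X Y Z. X \<union> Y \<union> Z = V \<and> X \<inter> Y = {} \<and> X \<inter> Z = {} \<and> Y \<inter> Z = {} \<longrightarrow>
       arcs_between A X Y \<le> arcs_between A Y X + arcs_between A X X + arcs_between A Y Y
         + arcs_between A Z X + arcs_between A Y Z"
    have eg: "EG V (dg A)" unfolding EG_def
    proof (intro allI impI)
      fix X Y Z assume p: "X \<union> Y \<union> Z = V \<and> X \<inter> Y = {} \<and> X \<inter> Z = {} \<and> Y \<inter> Z = {}"
      have "arcs_between A X Y \<le> arcs_between A Y X + arcs_between A X X + arcs_between A Y Y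
         + arcs_between A Z X + arcs_between A Y Z" using c p by blast
      then show "sum (dg A) X \<le> card X * (card X - 1) + card X * card Z + sum (dg A) Y"
        using key p by blast
    qed
    obtain H where H: "gr V H" "\<forall>v\<in>V. dg H v = dg A v"
      using realize[OF tf(1) eg] sumA assms(2) by auto
    show "has_P3_decomposition A" using real_to_dec[OF t H] .
  qed
qed


end
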